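(* Let $m>n$ be coprime positive integers, $\alpha=\epsilon_i-\delta_j$, $\lambda\in X_\alpha$, $\lambda^+=t_\alpha(\lambda)$, $\Lambda=x(\lambda)$ and $\Lambda^+=\tau_\alpha(\Lambda)$. If $(\Lambda^+,\beta)=0$ for $\beta=\epsilon_i-\delta_k$ with $k\in[m]$, then one of the following holds: (a) $k=j+1$, $\lambda'_j=\lambda'_{j+1}$ and $\beta=\epsilon_i-\delta_{j+1}$; (b) $\alpha=\epsilon_n-\delta_m$, $\beta=\epsilon_n-\delta_1$, $\lambda_1<m$, and $(m,1^{n-1})\subseteq\lambda^+$ (i.e. $\lambda^+_1=m$ and $\lambda^+_n\ge1$).
   Context: $X$ is the set of partitions $\lambda=(\lambda_1\ge\dots\ge\lambda_n\ge0)$ with $\lambda_1\le m$, drawn in an $n\times m$ rectangle with rows $\epsilon_1,\dots,\epsilon_n$ top to bottom and columns $\delta_1,\dots,\delta_m$; the diagram consists of boxes $\epsilon_i-\delta_j$ with $j\le\lambda_{n+1-i}$; $\lambda'_j=\#\{i:\lambda_i\ge j\}$. $X_\alpha$: diagrams for which box $\alpha$ is an outer corner; $t_\alpha$ adds that box. $x(\lambda)=(a_1,\dots,a_n|b_1,\dots,b_m)$ with $a_i=m(n-i)+n\lambda_{n+1-i}$, $b_j=n(j-1)+m\lambda'_j$; $\tau_\alpha$ adds $n$ to $a_i$ and $m$ to $b_j$. For $\Lambda=(a|b)$ and $\gamma=\epsilon_p-\delta_q$, $(\Lambda,\gamma)=a_p-b_q$. *)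

theory Defs
  imports Main
begin

definition Xset :: "nat \<Rightarrow> nat \<Rightarrow> (nat \<Rightarrow> nat) set" where
  "Xset n m = {lam. (\<forall>i. (i = 0 \<or> n < i) \<longrightarrow> lam i = 0)
                  \<and> (\<forall>i. 1 \<le> i \<and> i < n \<longrightarrow> lam (i+1) \<le> lam i)
                  \<and> (n \<ge> 1 \<longrightarrow> lam 1 \<le> m)}"

definition conjugate :: "nat \<Rightarrow> (nat \<Rightarrow> nat) \<Rightarrow> nat \<Rightarrow> nat" where
  "conjugate n lam j = card {i. 1 \<le> i \<and> i \<le> n \<and> j \<le> lam i}"

text \<open>Young diagram in the n x m rectangle: box eps_i - delta_j is the pair (i,j),
  present iff j <= lambda_{n+1-i}.\<close>
definition diagram :: "nat \<Rightarrow> (nat \<Rightarrow> nat) \<Rightarrow> (nat \<times> nat) set" where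
  "diagram n lam = {(i,j). 1 \<le> i \<and> i \<le> n \<and> 1 \<le> j \<and> j \<le> lam (n + 1 - i)}"

definition t_box :: "nat \<Rightarrow> nat \<times> nat \<Rightarrow> (nat \<Rightarrow> nat) \<Rightarrow> (nat \<Rightarrow> nat)" where
  "t_box n \<alpha> lam = lam (n + 1 - fst \<alpha> := lam (n + 1 - fst \<alpha>) + 1)"

definition Xalpha :: "nat \<Rightarrow> nat \<Rightarrow> nat \<times> nat \<Rightarrow> (nat \<Rightarrow> nat) set" where
  "Xalpha n m \<alpha> = {lam \<in> Xset n m.
      \<alpha> \<notin> diagram n lam \<and>
      t_box n \<alpha> lam \<in> Xset n m \<and>
      diagram n (t_box n \<alpha> lam) = diagram n lam \<union> {\<alpha>}}"

definition xmap :: "nat \<Rightarrow> nat \<Rightarrow> (nat \<Rightarrow> nat) \<Rightarrow> (nat \<Rightarrow> int) \<times> (nat \<Rightarrow> int)" where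
  "xmap n m lam =
     ((\<lambda>i. int m * (int n - int i) + int n * int (lam (n + 1 - i))),
      (\<lambda>j. int n * (int j - 1) + int m * int (conjugate n lam j)))"

definition tau :: "nat \<Rightarrow> nat \<Rightarrow> nat \<times> nat \<Rightarrow> (nat \<Rightarrow> int) \<times> (nat \<Rightarrow> int)
                      \<Rightarrow> (nat \<Rightarrow> int) \<times> (nat \<Rightarrow> int)" where
  "tau n m \<alpha> \<Lambda> = ((fst \<Lambda>)(fst \<alpha> := fst \<Lambda> (fst \<alpha>) + int n),
                     (snd \<Lambda>)(snd \<alpha> := snd \<Lambda> (snd \<alpha>) + int m))"

definition pairing :: "(nat \<Rightarrow> int) \<times> (nat \<Rightarrow> int) \<Rightarrow> nat \<times> nat \<Rightarrow> int" where
  "pairing \<Lambda> \<gamma> = fst \<Lambda> (fst \<gamma>) - snd \<Lambda> (snd \<gamma>)"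

end

theory Submission
  imports Defs "HOL-Computational_Algebra.Primes"
begin

lemma mono_X:
  assumes "lam \<in> Xset n m" "1 \<le> a" "a \<le> b" "b \<le> n"
  shows "lam b \<le> lam a"
  using assms(3,4)
proof (induction b rule: dec_induct)
  case base then show ?case by simp
next
  case (step b)
  have "lam (b+1) \<le> lam b" using assms(1,2) step unfolding Xset_def by auto
  then show ?case using step by simp
qed

theorem lemma4p7:
  fixes n m i j k :: nat and lam :: "nat \<Rightarrow> nat"
  assumes "0 < n" "n < m" "coprime m n"
    and "1 \<le> i" "i \<le> n" "1 \<le> j" "j \<le> m"
    and "lam \<in> Xalpha n m (i, j)"
    and "1 \<le> k" "k \<le> m"
    and "pairing (tau n m (i, j) (xmap n m lam)) (i, k) = 0"
  shows "(k = j + 1 \<and> conjugate n lam j = conjugate n lam (j + 1) \<and> (i, k) = (i, j + 1))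
       \<or> ((i, j) = (n, m) \<and> (i, k) = (n, 1) \<and> lam 1 < m
          \<and> t_box n (i, j) lam 1 = m \<and> t_box n (i, j) lam n \<ge> 1)"
proof -
  define r where "r = n + 1 - i"
  have r1: "1 \<le> r" "r \<le> n" using assms(4,5) unfolding r_def by auto
  have X: "lam \<in> Xset n m" and nd: "(i,j) \<notin> diagram n lam"
    and tX: "t_box n (i,j) lam \<in> Xset n m"
    and dg: "diagram n (t_box n (i,j) lam) = diagram n lam \<union> {(i,j)}"
    using assms(8) unfolding Xalpha_def by auto
  have lt: "lam r < j" using nd assms(4-6) unfolding diagram_def r_def by auto
  have "(i,j) \<in> diagram n (t_box n (i,j) lam)" using dg by auto
  then have "j \<le> lam r + 1" unfolding diagram_def t_box_def r_def by auto
  with lt have lr: "lam r + 1 = j" by simp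
  have tb: "t_box n (i,j) lam = lam (r := j)" using lr unfolding t_box_def r_def by auto
  have above: "j \<le> lam (r - 1)" if "r \<ge> 2"
  proof -
    have "t_box n (i,j) lam (r - 1 + 1) \<le> t_box n (i,j) lam (r - 1)"
    proof -
      have "\<forall>a. 1 \<le> a \<and> a < n \<longrightarrow> t_box n (i,j) lam (a+1) \<le> t_box n (i,j) lam a"
        using tX unfolding Xset_def by blast
      then show ?thesis using that r1 by (metis Suc_eq_plus1 Suc_le_eq le_add_diff_inverse2 less_le_trans nat_less_le one_add_one diff_less zero_less_one le_trans less_imp_le_nat add_le_imp_le_diff)
    qed
    then show ?thesis using tb that by (auto split: if_splits)
  qed
  have cj: "conjugate n lam j = r - 1"
  proof -
    have "{i'. 1 \<le> i' \<and> i' \<le> n \<and> j \<le> lam i'} = {1..<r}"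
    proof (intro set_eqI iffI)
      fix x assume x: "x \<in> {i'. 1 \<le> i' \<and> i' \<le> n \<and> j \<le> lam i'}"
      have "x < r"
      proof (rule ccontr)
        assume "\<not> x < r"
        then have "lam x \<le> lam r" using mono_X[OF X r1(1), of x] x by auto
        then show False using x lt by auto
      qed
      then show "x \<in> {1..<r}" using x by auto
    next
      fix x assume x: "x \<in> {1..<r}"
      then have "lam (r-1) \<le> lam x" using mono_X[OF X, of x "r-1"] r1 by auto
      then show "x \<in> {i'. 1 \<le> i' \<and> i' \<le> n \<and> j \<le> lam i'}"
        using above x r1 by auto
    qed
    then show ?thesis unfolding conjugate_def by simp
  qed
  have cle: "conjugate n lam q \<le> n" for q
  proof -
    have "conjugate n lam q \<le> card {1..n}" unfolding conjugate_def
      by (rule card_mono) auto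
    then show ?thesis by simp
  qed
  define c where "c = conjugate n lam k + (if k = j then 1 else 0)"
  have eq: "int m * (int n - int i) + int n * int j = int n * (int k - 1) + int m * int c"
    using assms(11) lr unfolding pairing_def tau_def xmap_def c_def r_def
    by (auto simp: algebra_simps split: if_splits)
  then have eq2: "int m * (int n - int i - int c) = int n * (int k - 1 - int j)"
    by (simp add: algebra_simps)
  then have "int m dvd int n * (int k - 1 - int j)" by (metis dvd_triv_left)
  moreover have "coprime (int m) (int n)" using assms(3) by simp
  ultimately have "int m dvd (int k - 1 - int j)" using coprime_dvd_mult_right_iff by blast
  then obtain t where t: "int k - 1 - int j = int m * t" by (auto elim: dvdE)
  have "t = 0 \<or> t = -1"
  proof -
    have mp: "0 < int m" using assms(2) by simp
    have "int m * t < int m * 1" unfolding t[symmetric] using assms(6,10) by linarith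
    then have t1: "t < 1" using mult_less_cancel_left_pos mp by blast
    have "int m * (-2) < int m * t" unfolding t[symmetric] using assms(2,7,9) by simp
    then have t2: "-2 < t" using mult_less_cancel_left_pos mp by blast
    from t1 t2 show ?thesis by auto
  qed
  then show ?thesis
  proof
    assume "t = 0"
    then have k: "k = j + 1" using t by simp
    then have "c = conjugate n lam (j+1)" unfolding c_def by simp
    moreover have "int m * (int n - int i - int c) = 0" using eq2 t \<open>t = 0\<close> by simp
    ultimately have "conjugate n lam (j+1) = n - i" using assms by simp
    then show ?thesis using k cj r_def by simp
  next
    assume "t = -1"
    then have kj: "int k - 1 - int j = - int m" using t by simp
    then have k1: "k = 1" and jm: "j = m" using assms(6,7,9,10) by auto
    have cc: "c = conjugate n lam 1" unfolding c_def using k1 jm assms(1,2) by simp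
    have "int m * (int n - int i - int c) = int m * (- int n)" using eq2 kj by simp
    then have "int m * (int n - int i - int c) = int m * (- int n)" by simp
    moreover have "int m \<noteq> 0" using assms(2) by simp
    ultimately have "int n - int i - int c = - int n" using mult_left_cancel by blast
    then have ci: "int c = 2 * int n - int i" by simp
    have "c \<le> n" using cc cle by simp
    then have ii: "i = n" using ci assms(5) by linarith
    have cn: "conjugate n lam 1 = n" using ci ii cc by linarith
    have r: "r = 1" unfolding r_def using ii by simp
    have "{i'. 1 \<le> i' \<and> i' \<le> n \<and> 1 \<le> lam i'} = {1..n}"
    proof (rule card_subset_eq)
      show "finite {1..n}" by simp
      show "{i'. 1 \<le> i' \<and> i' \<le> n \<and> 1 \<le> lam i'} \<subseteq> {1..n}" by auto
      show "card {i'. 1 \<le> i' \<and> i' \<le> n \<and> 1 \<le> lam i'} = card {1..n}"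
        using cn unfolding conjugate_def by simp
    qed
    moreover have "n \<in> {1..n}" using assms(1) by simp
    ultimately have ln: "1 \<le> lam n" by blast
    have l1: "lam 1 < m" using lr r jm by simp
    have t1: "t_box n (i,j) lam 1 = m" using tb r jm by simp
    have t2: "t_box n (i,j) lam n \<ge> 1"
    proof (cases "n = 1")
      case True then show ?thesis using t1 assms(2) by simp
    next
      case False then show ?thesis using tb r ln by simp
    qed
    show ?thesis using ii k1 jm l1 t1 t2 by blast
  qed
qed

end
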